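(* Let $a,d,r,h,n$ be positive integers with $r\geq2$, $\gcd(a,d)=\gcd(a,r)=1$ and $d>hn(r-1)$. Put $a_0=a$ and $a_{k+1}=ha+r^kd$ for $0\leq k\leq n$, and suppose $\{a_0,\dots,a_{n+1}\}$ is a minimal system of generators of the numerical semigroup $\mathfrak{S}_{n+2}=\langle a_0,\dots,a_{n+1}\rangle$. For $1\leq i\leq a-1$ let $i=\sum_{k=0}^{n}a_{ki}r^k$ be the $r$-adic representation of $i$ up to order $n$ and $\ell_i=\sum_{k=0}^{n}a_{ki}$. Then $$\mathrm{Ap}(\mathfrak{S}_{n+2},a)=\{0\}\cup\{\ell_iha+id\mid 1\leq i\leq a-1\}.$$
   Context: The $r$-adic representation of $i$ up to order $n$ is the unique expression $i=\sum_{k=0}^{n}\alpha_kr^k$ with nonnegative integers $\alpha_k$, $0\leq\alpha_k\leq r-1$ for $k\leq n-1$ and $\alpha_n$ unrestricted. $\mathrm{Ap}(\Gamma,a)=\{s\in\Gamma\mid s-a\notin\Gamma\}$. *)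

theory Defs
  imports Main
begin

definition gen_semigroup :: "nat set \<Rightarrow> nat set" where
  "gen_semigroup A = {x. \<exists>c :: nat \<Rightarrow> nat. x = (\<Sum>g\<in>A. c g * g)}"

definition minimal_generators :: "nat set \<Rightarrow> bool" where
  "minimal_generators A \<longleftrightarrow> (\<forall>g\<in>A. g \<notin> gen_semigroup (A - {g}))"

definition apery :: "nat set \<Rightarrow> nat \<Rightarrow> nat set" where
  "apery S a = {s \<in> S. int s - int a \<notin> int ` S}"

text \<open>k-th digit of the r-adic representation of i up to order n:
  digits 0..n-1 in [0,r-1], the n-th digit unrestricted.\<close>
definition radic_digit :: "nat \<Rightarrow> nat \<Rightarrow> nat \<Rightarrow> nat \<Rightarrow> nat" where
  "radic_digit r n i k = (if k < n then (i div r ^ k) mod r else i div r ^ n)"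

definition radic_len :: "nat \<Rightarrow> nat \<Rightarrow> nat \<Rightarrow> nat" where
  "radic_len r n i = (\<Sum>k\<le>n. radic_digit r n i k)"

end

theory Submission
  imports Defs
begin

lemma radic_len_0: "radic_len r 0 m = m"
  by (simp add: radic_len_def radic_digit_def)

lemma radic_digit_Suc0: "radic_digit r (Suc n) m 0 = m mod r"
  by (simp add: radic_digit_def)

lemma radic_digit_SucSuc: "radic_digit r (Suc n) m (Suc k) = radic_digit r n (m div r) k"
  by (simp add: radic_digit_def div_mult2_eq mult.commute)

lemma radic_len_Suc: "radic_len r (Suc n) m = m mod r + radic_len r n (m div r)"
  unfolding radic_len_def
  by (simp only: sum.atMost_Suc_shift radic_digit_Suc0 radic_digit_SucSuc)

lemma radic_repr: "(\<Sum>k\<le>n. radic_digit r n m k * r ^ k) = m"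
proof (induction n arbitrary: m)
  case 0
  then show ?case by (simp add: radic_digit_def)
next
  case (Suc n)
  have "(\<Sum>k\<le>Suc n. radic_digit r (Suc n) m k * r ^ k)
      = m mod r + r * (\<Sum>k\<le>n. radic_digit r n (m div r) k * r ^ k)"
    by (simp only: sum.atMost_Suc_shift radic_digit_Suc0 radic_digit_SucSuc sum_distrib_left)
       (simp add: algebra_simps)
  also have "\<dots> = m" using Suc by simp
  finally show ?case .
qed

lemma radic_min:
  assumes "r \<ge> 1"
  shows "radic_len r n (\<Sum>k\<le>n. c k * r ^ k) \<le> (\<Sum>k\<le>n. c k)"
  using assms
proof (induction n arbitrary: c)
  case 0
  then show ?case by (simp add: radic_len_0)
next
  case (Suc n)
  define c' where "c' k = (if k = 0 then c 1 + c 0 div r else c (Suc k))" for k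
  have e: "(\<Sum>k\<le>Suc n. c k * r ^ k) = c 0 + r * (\<Sum>k\<le>n. c (Suc k) * r ^ k)"
    by (simp only: sum.atMost_Suc_shift sum_distrib_left) (simp add: algebra_simps)
  have m1: "(c 0 + r * (\<Sum>k\<le>n. c (Suc k) * r ^ k)) mod r = c 0 mod r"
    by simp
  have m2: "(c 0 + r * (\<Sum>k\<le>n. c (Suc k) * r ^ k)) div r = c 0 div r + (\<Sum>k\<le>n. c (Suc k) * r ^ k)"
    using Suc.prems by simp
  have s1: "(\<Sum>k\<le>n. c' k * r ^ k) = c 0 div r + (\<Sum>k\<le>n. c (Suc k) * r ^ k)"
    by (simp add: c'_def sum.atMost_shift)
  have s2: "(\<Sum>k\<le>n. c' k) = c 0 div r + (\<Sum>k\<le>n. c (Suc k))"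
    by (simp add: c'_def sum.atMost_shift)
  have ih: "radic_len r n (\<Sum>k\<le>n. c' k * r ^ k) \<le> (\<Sum>k\<le>n. c' k)"
    using Suc by blast
  have d: "c 0 mod r + c 0 div r \<le> c 0"
  proof -
    have "c 0 div r \<le> r * (c 0 div r)" using Suc.prems by simp
    then show ?thesis by (metis add_le_cancel_left mod_mult_div_eq)
  qed
  show ?case
    unfolding e radic_len_Suc m1 m2
  proof -
    have "(\<Sum>k\<le>Suc n. c k) = c 0 + (\<Sum>k\<le>n. c (Suc k))"
      by (simp only: sum.atMost_Suc_shift)
    then show "c 0 mod r + radic_len r n (c 0 div r + (\<Sum>k\<le>n. c (Suc k) * r ^ k)) \<le> (\<Sum>k\<le>Suc n. c k)"
      using ih[unfolded s1 s2] d by linarith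
  qed
qed

lemma radic_bound:
  assumes "r \<ge> 1"
  shows "radic_len r n m \<le> n * (r - 1) + m div r ^ n"
proof -
  have "radic_len r n m = (\<Sum>k<n. radic_digit r n m k) + m div r ^ n"
    by (simp add: radic_len_def lessThan_Suc_atMost[symmetric] radic_digit_def)
  also have "(\<Sum>k<n. radic_digit r n m k) \<le> (\<Sum>k<n. r - 1)"
    apply (rule sum_mono)
    using assms by (simp add: radic_digit_def less_Suc_eq_le[symmetric])
  finally show ?thesis by simp
qed

lemma gen_char:
  fixes a d r h n :: nat
  assumes "a > 0" "d > 0" "r \<ge> 2" "h > 0"
  shows "x \<in> gen_semigroup ({a} \<union> {h * a + r ^ k * d | k. k \<le> n}) \<longleftrightarrow>
    (\<exists>c0 c. x = c0 * a + (\<Sum>k\<le>n. c k * (h * a + r ^ k * d)))"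
proof -
  define f where "f k = h * a + r ^ k * d" for k
  have G: "{a} \<union> {h * a + r ^ k * d | k. k \<le> n} = insert a (f ` {..n})"
    by (auto simp: f_def)
  have inj: "inj_on f {..n}"
  proof
    fix x y assume "f x = f y"
    then have "r ^ x = r ^ y" using assms by (simp add: f_def)
    then show "x = y" using assms by (simp add: power_inject_exp)
  qed
  have na: "a \<notin> f ` {..n}"
  proof
    assume "a \<in> f ` {..n}"
    then obtain k where "a = h * a + r ^ k * d" by (auto simp: f_def)
    moreover have "r ^ k * d > 0" using assms by simp
    moreover have "h * a \<ge> a" using assms by simp
    ultimately show False by linarith
  qed
  have sumeq: "(\<Sum>g\<in>insert a (f ` {..n}). C g * g) = C a * a + (\<Sum>k\<le>n. C (f k) * f k)" for C
    using inj na by (simp add: sum.reindex)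
  show ?thesis
    unfolding gen_semigroup_def G mem_Collect_eq sumeq
  proof
    assume "\<exists>C. x = C a * a + (\<Sum>k\<le>n. C (f k) * f k)"
    then obtain C where "x = C a * a + (\<Sum>k\<le>n. C (f k) * f k)" by blast
    then show "\<exists>c0 c. x = c0 * a + (\<Sum>k\<le>n. c k * (h * a + r ^ k * d))"
      by (auto simp: f_def)
  next
    assume "\<exists>c0 c. x = c0 * a + (\<Sum>k\<le>n. c k * (h * a + r ^ k * d))"
    then obtain c0 c where x: "x = c0 * a + (\<Sum>k\<le>n. c k * f k)" by (auto simp: f_def)
    define C where "C g = (if g = a then c0 else c (the_inv_into {..n} f g))" for g
    have "C (f k) = c k" if "k \<le> n" for k
      using that na inj by (auto simp: C_def the_inv_into_f_f)
    then have "(\<Sum>k\<le>n. C (f k) * f k) = (\<Sum>k\<le>n. c k * f k)"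
      by (intro sum.cong) auto
    then show "\<exists>C. x = C a * a + (\<Sum>k\<le>n. C (f k) * f k)"
      using x by (intro exI[of _ C]) (simp add: C_def)
  qed
qed

lemma sum_split:
  fixes c :: "nat \<Rightarrow> nat" and h a r d :: nat
  shows
  "(\<Sum>k\<le>n. c k * (h * a + r ^ k * d)) = h * (\<Sum>k\<le>n. c k) * a + (\<Sum>k\<le>n. c k * r ^ k) * d"
proof -
  have "(\<Sum>k\<le>n. c k * (h * a + r ^ k * d)) = (\<Sum>k\<le>n. (h * a) * c k + (c k * r ^ k) * d)"
  proof (rule sum.cong[OF refl])
    fix k show "c k * (h * a + r ^ k * d) = (h * a) * c k + (c k * r ^ k) * d"
      by (simp add: add_mult_distrib2)
  qed
  also have "\<dots> = (h * a) * (\<Sum>k\<le>n. c k) + (\<Sum>k\<le>n. c k * r ^ k) * d"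
    by (simp add: sum.distrib sum_distrib_left sum_distrib_right)
  finally show ?thesis by (simp add: algebra_simps)
qed

lemma key:
  fixes a d r h n :: nat
  assumes "r \<ge> 1" "d > h * n * (r - 1)"
    and M: "(\<Sum>k\<le>n. c k * r ^ k) = i + j * a"
  shows "h * radic_len r n i \<le> h * (\<Sum>k\<le>n. c k) + j * d"
    and "j > 0 \<Longrightarrow> h * radic_len r n i < h * (\<Sum>k\<le>n. c k) + j * d"
proof -
  let ?L = "\<Sum>k\<le>n. c k"
  let ?M = "\<Sum>k\<le>n. c k * r ^ k"
  have jpos: "h * radic_len r n i < h * ?L + j * d" if "j > 0"
  proof -
    have "?M \<le> (\<Sum>k\<le>n. c k * r ^ n)"
      using assms(1) by (intro sum_mono) (simp add: power_increasing)
    then have "?M \<le> ?L * r ^ n" by (simp add: sum_distrib_right)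
    have "?M div r ^ n \<le> ?L"
      using div_le_mono[OF \<open>?M \<le> ?L * r ^ n\<close>, of "r ^ n"] assms(1) by simp
    moreover have "i div r ^ n \<le> ?M div r ^ n" using M by (simp add: div_le_mono)
    ultimately have "radic_len r n i \<le> n * (r - 1) + ?L"
      using radic_bound[OF assms(1), of n i] by linarith
    then have "h * radic_len r n i \<le> h * n * (r - 1) + h * ?L"
      by (metis add_mult_distrib2 mult.assoc mult_le_mono2)
    moreover have "d \<le> j * d" using that by simp
    ultimately show ?thesis using assms(2) by linarith
  qed
  show "h * radic_len r n i \<le> h * ?L + j * d"
  proof (cases "j = 0")
    case True
    then have "radic_len r n i \<le> ?L" using radic_min[OF assms(1), of n c] M by simp
    then have "h * radic_len r n i \<le> h * ?L" by (rule mult_le_mono2)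
    then show ?thesis by linarith
  next
    case False then show ?thesis using jpos by simp
  qed
  show "j > 0 \<Longrightarrow> h * radic_len r n i < h * ?L + j * d" using jpos by blast
qed

lemma radic_len_zero: "radic_len r n 0 = 0"
  unfolding radic_len_def by (intro sum.neutral) (simp add: radic_digit_def)

lemma cancel_mod:
  fixes a d i i' :: nat
  assumes "coprime a d" "i < a" "i' < a" "(i' * d) mod a = (i * d) mod a"
  shows "i' = i"
proof -
  have *: "i' = i" if "i \<le> i'" "i' < a" "(i' * d) mod a = (i * d) mod a" for i i' :: nat
  proof -
    have "a dvd i' * d - i * d" using that by (simp add: mod_eq_dvd_iff_nat)
    then have "a dvd (i' - i) * d" by (simp add: diff_mult_distrib)
    then have "a dvd i' - i" using assms(1) by (simp add: coprime_dvd_mult_left_iff)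
    moreover have "i' - i < a" using that by linarith
    ultimately have "i' - i = 0" by (metis dvd_imp_le neq0_conv not_less)
    then show ?thesis using that by linarith
  qed
  show ?thesis
  proof (cases "i \<le> i'")
    case True then show ?thesis using * assms by blast
  next
    case False then show ?thesis using *[of i' i] assms by simp
  qed
qed

theorem theorem7p3:
  fixes a d r h n :: nat
  assumes "a > 0" "d > 0" "r > 0" "h > 0" "n > 0"
    and "r \<ge> 2"
    and "gcd a d = 1" "gcd a r = 1"
    and "d > h * n * (r - 1)"
    and "minimal_generators ({a} \<union> {h * a + r ^ k * d | k. k \<le> n})"
  shows "apery (gen_semigroup ({a} \<union> {h * a + r ^ k * d | k. k \<le> n})) a
         = {0} \<union> {radic_len r n i * h * a + i * d | i. 1 \<le> i \<and> i \<le> a - 1}"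
proof -
  define S where "S = gen_semigroup ({a} \<union> {h * a + r ^ k * d | k. k \<le> n})"
  have r1: "r \<ge> 1" using assms by simp
  have memS: "x \<in> S \<longleftrightarrow> (\<exists>c0 c. x = (c0 + h * (\<Sum>k\<le>n. c k)) * a + (\<Sum>k\<le>n. c k * r ^ k) * d)" for x
    unfolding S_def gen_char[OF assms(1,2,6,4)] sum_split by (simp add: algebra_simps)
  have T: "(e + h * radic_len r n i) * a + i * d \<in> S" for e i
    unfolding memS
    by (rule exI[of _ e], rule exI[of _ "radic_digit r n i"]) (simp add: radic_len_def radic_repr)
  have ap: "s \<in> apery S a \<longleftrightarrow> s \<in> S \<and> \<not> (a \<le> s \<and> s - a \<in> S)" for s
  proof -
    have "int s - int a \<in> int ` S \<longleftrightarrow> a \<le> s \<and> s - a \<in> S"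
    proof
      assume "int s - int a \<in> int ` S"
      then obtain y where "y \<in> S" "int s - int a = int y" by auto
      then have "s = y + a" by linarith
      then show "a \<le> s \<and> s - a \<in> S" using \<open>y \<in> S\<close> by simp
    next
      assume "a \<le> s \<and> s - a \<in> S"
      then have "int s - int a = int (s - a)" by simp
      then show "int s - int a \<in> int ` S" using \<open>a \<le> s \<and> s - a \<in> S\<close> by blast
    qed
    then show ?thesis unfolding apery_def by auto
  qed
  have cop: "coprime a d" using assms(7) by (simp add: coprime_iff_gcd_eq_1)
  show ?thesis
    unfolding S_def[symmetric]
  proof (intro equalityI subsetI)
    fix s assume "s \<in> apery S a"
    then have sS: "s \<in> S" and nsa: "\<not> (a \<le> s \<and> s - a \<in> S)" using ap by auto
    obtain c0 c where s: "s = (c0 + h * (\<Sum>k\<le>n. c k)) * a + (\<Sum>k\<le>n. c k * r ^ k) * d"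
      using sS memS by blast
    define M where "M = (\<Sum>k\<le>n. c k * r ^ k)"
    define L where "L = (\<Sum>k\<le>n. c k)"
    define i where "i = M mod a"
    define j where "j = M div a"
    have Mij: "M = i + j * a" unfolding i_def j_def by simp
    have ia: "i < a" unfolding i_def using assms(1) by simp
    have k1: "h * radic_len r n i \<le> h * L + j * d"
      using key(1)[OF r1 assms(9), of c i j a] Mij unfolding M_def L_def by simp
    define E where "E = c0 + h * L + j * d"
    have sE: "s = E * a + i * d" unfolding s E_def using Mij unfolding M_def[symmetric] L_def[symmetric]
      by (simp add: algebra_simps)
    have "\<not> E > h * radic_len r n i"
    proof
      assume "E > h * radic_len r n i"
      then have "s - a = ((E - 1 - h * radic_len r n i) + h * radic_len r n i) * a + i * d"
        unfolding sE by (simp add: algebra_simps diff_mult_distrib)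
      then have "s - a \<in> S" using T by simp
      moreover have "a \<le> s"
      proof -
        have "1 \<le> E" using \<open>E > h * radic_len r n i\<close> by linarith
        then have "1 * a \<le> E * a" by (rule mult_le_mono1)
        then show ?thesis unfolding sE by linarith
      qed
      ultimately show False using nsa by blast
    qed
    then have "E = h * radic_len r n i" using k1 unfolding E_def by linarith
    then have s2: "s = radic_len r n i * h * a + i * d" using sE by simp
    show "s \<in> {0} \<union> {radic_len r n i * h * a + i * d | i. 1 \<le> i \<and> i \<le> a - 1}"
    proof (cases "i = 0")
      case True
      then show ?thesis using s2 by (simp add: radic_len_zero)
    next
      case False
      then show ?thesis using s2 ia by auto
    qed
  next
    fix s assume "s \<in> {0} \<union> {radic_len r n i * h * a + i * d | i. 1 \<le> i \<and> i \<le> a - 1}"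
    then consider "s = 0" | i where "1 \<le> i" "i \<le> a - 1" "s = radic_len r n i * h * a + i * d"
      by blast
    then show "s \<in> apery S a"
    proof cases
      case 1
      have "0 \<in> S" using T[of 0 0] by (simp add: radic_len_zero)
      then show ?thesis using 1 ap assms(1) by simp
    next
      case (2 i)
      have ia: "i < a" using 2 assms(1) by simp
      have sS: "s \<in> S" using T[of 0 i] 2 by (simp add: algebra_simps)
      have "\<not> (a \<le> s \<and> s - a \<in> S)"
      proof
        assume "a \<le> s \<and> s - a \<in> S"
        then obtain c0 c where sa: "s - a = (c0 + h * (\<Sum>k\<le>n. c k)) * a + (\<Sum>k\<le>n. c k * r ^ k) * d"
          and as: "a \<le> s" using memS by blast
        define M where "M = (\<Sum>k\<le>n. c k * r ^ k)"
        define L where "L = (\<Sum>k\<le>n. c k)"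
        define i' where "i' = M mod a"
        define j where "j = M div a"
        have Mij: "M = i' + j * a" unfolding i'_def j_def by simp
        have ia': "i' < a" unfolding i'_def using assms(1) by simp
        define E where "E = c0 + 1 + h * L + j * d"
        have sE: "s = E * a + i' * d" using sa as Mij unfolding M_def[symmetric] L_def[symmetric] E_def
          by (simp add: algebra_simps)
        have s2: "s = (h * radic_len r n i) * a + i * d" using 2 by (simp add: algebra_simps)
        have "(i' * d) mod a = (i * d) mod a"
        proof -
          have "(i' * d) mod a = (E * a + i' * d) mod a" by simp
          also have "\<dots> = ((h * radic_len r n i) * a + i * d) mod a" using sE s2 by simp
          also have "\<dots> = (i * d) mod a" by simp
          finally show ?thesis .
        qed
        then have "i' = i" using cancel_mod[OF cop ia ia'] by simp
        then have "E * a + i * d = (h * radic_len r n i) * a + i * d" using sE s2 by metis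
        then have "E * a = (h * radic_len r n i) * a" by (rule add_right_imp_eq)
        then have "E = h * radic_len r n i" using assms(1) by simp
        moreover have "h * radic_len r n i \<le> h * L + j * d"
          using key(1)[OF r1 assms(9), of c i j a] Mij \<open>i' = i\<close> unfolding M_def L_def by simp
        ultimately show False unfolding E_def by linarith
      qed
      then show ?thesis using sS ap by blast
    qed
  qed
qed

end
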